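(* Consider the two "pruning relations" among directed graphs on vertex set $[n]$ (for distinct $i,j,k$): (Pruning V) $\{(i,j),(i,k)\} = \{(i,j),(j,k)\} - \{(i,k),(k,j)\}$, and (Pruning A) $\{(i,k),(j,k)\} = \{(i,j),(j,k)\} - \{(j,i),(i,k)\}$, whose left-hand term is called the join term. A multiple of one of these relations is obtained by adding the same set $E$ of additional directed edges to each of its three terms, such that none of the three resulting graphs contains a loop (a cycle of the underlying undirected multigraph, oriented or not). Then in every multiple of either pruning relation, the term built from the join term has defect strictly larger than the defect of each of the other two terms.
   Context: For a directed forest (a directed graph whose underlying undirected multigraph has no cycles), a pair of distinct vertices in the same connected component is unordered if there is no directed path of edges from one to the other. The defect of a tree is its number of unordered pairs of vertices, and the defect of a forest is the sum of the defects of its connected components. *)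

theory Defs
  imports Main
begin

text \<open>A directed graph on vertex set [n] = {1..n} is a set of directed edges
  D :: (nat \<times> nat) set with D \<subseteq> {1..n} \<times> {1..n}.\<close>

definition joins :: "nat \<times> nat \<Rightarrow> nat \<Rightarrow> nat \<Rightarrow> bool" where
  "joins e u v \<longleftrightarrow> e = (u, v) \<or> e = (v, u)"

text \<open>Length 1 is a
  self-loop, length 2 a pair of antiparallel edges.\<close>
definition has_loop :: "(nat \<times> nat) set \<Rightarrow> bool" where
  "has_loop D \<longleftrightarrow> (\<exists>es vs. es \<noteq> [] \<and> length vs = length es \<and> distinct es \<and> distinct vs
      \<and> set es \<subseteq> D
      \<and> (\<forall>k < length es. joins (es ! k) (vs ! k) (vs ! ((k + 1) mod length es))))"

definition directed_forest :: "(nat \<times> nat) set \<Rightarrow> bool" where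
  "directed_forest D \<longleftrightarrow> \<not> has_loop D"

definition same_component :: "(nat \<times> nat) set \<Rightarrow> nat \<Rightarrow> nat \<Rightarrow> bool" where
  "same_component D u v \<longleftrightarrow> (u, v) \<in> (D \<union> D\<inverse>)\<^sup>*"

definition unordered_pair :: "(nat \<times> nat) set \<Rightarrow> nat \<Rightarrow> nat \<Rightarrow> bool" where
  "unordered_pair D u v \<longleftrightarrow> u \<noteq> v \<and> same_component D u v
      \<and> (u, v) \<notin> D\<^sup>* \<and> (v, u) \<notin> D\<^sup>*"

text \<open>Defect of a directed forest on [n]: the number of unordered pairs of vertices
  (= sum over components of the defects of the component trees).\<close>
definition defect :: "nat \<Rightarrow> (nat \<times> nat) set \<Rightarrow> nat" where
  "defect n D = card {{u, v} | u v. u \<in> {1..n} \<and> v \<in> {1..n} \<and> unordered_pair D u v}"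

text \<open>Terms of the pruning relations: (join term, first term, subtracted term).\<close>
definition pruningV :: "nat \<Rightarrow> nat \<Rightarrow> nat \<Rightarrow> (nat \<times> nat) set \<times> (nat \<times> nat) set \<times> (nat \<times> nat) set" where
  "pruningV i j k = ({(i,j),(i,k)}, {(i,j),(j,k)}, {(i,k),(k,j)})"

definition pruningA :: "nat \<Rightarrow> nat \<Rightarrow> nat \<Rightarrow> (nat \<times> nat) set \<times> (nat \<times> nat) set \<times> (nat \<times> nat) set" where
  "pruningA i j k = ({(i,k),(j,k)}, {(i,j),(j,k)}, {(j,i),(i,k)})"

end

theory Submission imports Defs begin

lemma loop_from_path:
  assumes "distinct vs" "vs \<noteq> []"
    and "\<forall>t. Suc t < length vs \<longrightarrow> (vs!t, vs!Suc t) \<in> D"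
    and "e \<in> D" "joins e (last vs) (hd vs)"
    and "\<forall>t. Suc t < length vs \<longrightarrow> (vs!t, vs!Suc t) \<noteq> e"
  shows "has_loop D"
proof -
  define es where "es = map (\<lambda>t. (vs!t, vs!Suc t)) [0..<length vs - 1] @ [e]"
  have len: "length es = length vs" using assms(2) by (simp add: es_def)
  have inj: "inj_on (\<lambda>t. (vs!t, vs!Suc t)) {0..<length vs - 1}"
    using assms(1) by (auto simp: inj_on_def nth_eq_iff_index_eq)
  have ne: "e \<notin> set (map (\<lambda>t. (vs!t, vs!Suc t)) [0..<length vs - 1])"
    using assms(6) by (auto simp: less_diff_conv)
  have d: "distinct es" using inj ne by (simp add: es_def distinct_map)
  have s: "set es \<subseteq> D" using assms(3,4) by (auto simp: es_def)
  have j: "\<forall>k < length es. joins (es ! k) (vs ! k) (vs ! ((k + 1) mod length es))"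
  proof (intro allI impI)
    fix k assume k: "k < length es"
    show "joins (es ! k) (vs ! k) (vs ! ((k + 1) mod length es))"
    proof (cases "k < length vs - 1")
      case True
      then have "es ! k = (vs!k, vs!Suc k)" by (simp add: es_def nth_append)
      moreover have "(k+1) mod length es = Suc k" using True len by simp
      ultimately show ?thesis by (simp add: joins_def)
    next
      case False
      then have kk: "k = length vs - 1" using k len by simp
      then have "es ! k = e" by (simp add: es_def nth_append)
      moreover have "(k+1) mod length es = 0" using kk len assms(2) by simp
      moreover have "vs ! k = last vs" using kk assms(2) by (simp add: last_conv_nth)
      moreover have "vs ! 0 = hd vs" using assms(2) by (simp add: hd_conv_nth)
      ultimately show ?thesis using assms(5) by simp
    qed
  qed
  have nn: "es \<noteq> []" by (simp add: es_def)
  show ?thesis unfolding has_loop_def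
    apply (rule exI[of _ es], rule exI[of _ vs]) using len d s j assms(1) nn by simp
qed

lemma path_exists:
  assumes "(x,y) \<in> D\<^sup>*"
  shows "\<exists>p. distinct p \<and> p \<noteq> [] \<and> hd p = x \<and> last p = y \<and>
           (\<forall>t. Suc t < length p \<longrightarrow> (p!t, p!Suc t) \<in> D)"
  using assms
proof (induction rule: converse_rtrancl_induct)
  case base
  then show ?case by (intro exI[of _ "[y]"]) simp
next
  case (step x z)
  then obtain p where p: "distinct p" "p \<noteq> []" "hd p = z" "last p = y"
    "\<forall>t. Suc t < length p \<longrightarrow> (p!t, p!Suc t) \<in> D" by blast
  show ?case
  proof (cases "x \<in> set p")
    case True
    then obtain s where s: "s < length p" "p ! s = x" by (meson in_set_conv_nth)
    show ?thesis
    proof (intro exI[of _ "drop s p"] conjI)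
      show "distinct (drop s p)" using p(1) by simp
      show "drop s p \<noteq> []" using s by simp
      show "hd (drop s p) = x" using s by (simp add: hd_drop_conv_nth)
      show "last (drop s p) = y" using s p(4) by simp
      show "\<forall>t. Suc t < length (drop s p) \<longrightarrow> (drop s p ! t, drop s p ! Suc t) \<in> D"
      proof (intro allI impI)
        fix t assume "Suc t < length (drop s p)"
        then have "Suc (s + t) < length p" by simp
        then have "(p!(s+t), p!Suc (s+t)) \<in> D" using p(5) by blast
        then show "(drop s p ! t, drop s p ! Suc t) \<in> D" using s by simp
      qed
    qed
  next
    case False
    show ?thesis
    proof (intro exI[of _ "x # p"] conjI)
      show "distinct (x # p)" using p(1) False by simp
      show "\<forall>t. Suc t < length (x # p) \<longrightarrow> ((x # p) ! t, (x # p) ! Suc t) \<in> D"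
      proof (intro allI impI)
        fix t assume "Suc t < length (x # p)"
        then show "((x # p) ! t, (x # p) ! Suc t) \<in> D"
          using p(2,3,5) step(1) by (cases t) (auto simp: hd_conv_nth)
      qed
    qed (use p in auto)
  qed
qed

lemma L1:
  assumes "\<not> has_loop D" "(a,b) \<in> D" "(a,c) \<in> D" "b \<noteq> c"
  shows "(b,c) \<notin> D\<^sup>*"
proof
  assume "(b,c) \<in> D\<^sup>*"
  from path_exists[OF this] obtain p where p: "distinct p" "p \<noteq> []" "hd p = b" "last p = c"
    "\<forall>t. Suc t < length p \<longrightarrow> (p!t, p!Suc t) \<in> D" by blast
  have p0: "p ! 0 = b" using p(2,3) by (simp add: hd_conv_nth)
  show False
  proof (cases "a \<in> set p")
    case True
    then obtain s where s: "s < length p" "p ! s = a" by (meson in_set_conv_nth)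
    let ?q = "take (Suc s) p"
    have "has_loop D"
    proof (rule loop_from_path[of ?q D "(a,b)"])
      show "distinct ?q" using p(1) by simp
      show "?q \<noteq> []" using p(2) by simp
      show "\<forall>t. Suc t < length ?q \<longrightarrow> (?q!t, ?q!Suc t) \<in> D"
      proof (intro allI impI)
        fix t assume t: "Suc t < length ?q"
        then have "Suc t < length p" "Suc t \<le> s" by auto
        then show "(?q!t, ?q!Suc t) \<in> D" using p(5) by simp
      qed
      show "(a,b) \<in> D" by fact
      have ql: "length ?q = Suc s" using s by simp
      have "last ?q = ?q ! s" using ql by (subst last_conv_nth) auto
      then have "last ?q = a" using s by simp
      moreover have "hd ?q = b" using p0 p(2) by (simp add: hd_conv_nth)
      ultimately show "joins (a,b) (last ?q) (hd ?q)" by (simp add: joins_def)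
      show "\<forall>t. Suc t < length ?q \<longrightarrow> (?q!t, ?q!Suc t) \<noteq> (a,b)"
      proof (intro allI impI notI)
        fix t assume t: "Suc t < length ?q" and e: "(?q!t, ?q!Suc t) = (a,b)"
        then have tl: "t < length p" "t < s" by auto
        then have "p ! t = p ! s" using e s by simp
        then have "t = s" using p(1) tl s(1) by (simp add: nth_eq_iff_index_eq)
        then show False using tl by simp
      qed
    qed
    then show False using assms(1) by simp
  next
    case False
    have e: "((a # p)!t, (a # p)!Suc t) \<in> D" if t: "Suc t < length (a # p)" for t
    proof (cases t)
      case 0 then show ?thesis using p0 assms(2) by simp
    next
      case (Suc t')
      then have "Suc t' < length p" using t by simp
      then have "(p!t', p!Suc t') \<in> D" using p(5) by blast
      then show ?thesis using Suc by simp
    qed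
    have ne: "((a # p)!t, (a # p)!Suc t) \<noteq> (a,c)" if t: "Suc t < length (a # p)" for t
    proof (cases t)
      case 0 then show ?thesis using p0 assms(4) by simp
    next
      case (Suc t')
      then have "t' < length p" using t by simp
      then have "p ! t' \<in> set p" by (rule nth_mem)
      then have "p ! t' \<noteq> a" using False by blast
      then show ?thesis using Suc by simp
    qed
    have j: "joins (a,c) (last (a # p)) (hd (a # p))" using p(2,4) by (simp add: joins_def)
    have d: "distinct (a # p)" using p(1) False by simp
    have "has_loop D"
      apply (rule loop_from_path[of "a # p" D "(a,c)"])
           apply (rule d)
          apply simp
         apply (use e in blast)
        apply (rule assms(3))
       apply (rule j)
      apply (use ne in blast)
      done
    then show False using assms(1) by simp
  qed
qed

lemma has_loop_converse: "has_loop (D\<inverse>) \<Longrightarrow> has_loop D"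
  unfolding has_loop_def
proof (elim exE conjE)
  fix es vs
  assume h: "es \<noteq> []" "length vs = length es" "distinct es" "distinct vs" "set es \<subseteq> D\<inverse>"
    "\<forall>k<length es. joins (es ! k) (vs ! k) (vs ! ((k + 1) mod length es))"
  show "\<exists>es vs. es \<noteq> [] \<and> length vs = length es \<and> distinct es \<and> distinct vs \<and> set es \<subseteq> D \<and>
      (\<forall>k<length es. joins (es ! k) (vs ! k) (vs ! ((k + 1) mod length es)))"
    apply (rule exI[of _ "map prod.swap es"], rule exI[of _ vs])
    using h by (auto simp: distinct_map joins_def)
qed

lemma L2:
  assumes "\<not> has_loop D" "(b,a) \<in> D" "(c,a) \<in> D" "b \<noteq> c"
  shows "(b,c) \<notin> D\<^sup>*"
proof -
  have "\<not> has_loop (D\<inverse>)" using assms(1) has_loop_converse by blast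
  then have "(c,b) \<notin> (D\<inverse>)\<^sup>*" using L1[of "D\<inverse>" a c b] assms by auto
  then show ?thesis by (simp add: rtrancl_converse)
qed


lemma key:
  assumes "J \<subseteq> (A \<union> E)\<^sup>*"
    and "A \<union> E \<union> (A \<union> E)\<inverse> \<subseteq> (J \<union> E \<union> (J \<union> E)\<inverse>)\<^sup>*"
    and "J \<union> E \<union> (J \<union> E)\<inverse> \<subseteq> (A \<union> E \<union> (A \<union> E)\<inverse>)\<^sup>*"
    and "x \<in> {1..n}" "y \<in> {1..n}" "x \<noteq> y" "(x,y) \<in> A"
    and "(x,y) \<notin> (J \<union> E)\<^sup>*" "(y,x) \<notin> (J \<union> E)\<^sup>*"
    and "same_component (J \<union> E) x y"
  shows "defect n (A \<union> E) < defect n (J \<union> E)"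
proof -
  have "J \<union> E \<subseteq> (A \<union> E)\<^sup>*" using assms(1) by auto
  then have rt: "(J \<union> E)\<^sup>* \<subseteq> (A \<union> E)\<^sup>*" by (rule rtrancl_subset_rtrancl)
  have sc: "same_component (A \<union> E) u v = same_component (J \<union> E) u v" for u v
  proof -
    have "(A \<union> E \<union> (A \<union> E)\<inverse>)\<^sup>* \<subseteq> (J \<union> E \<union> (J \<union> E)\<inverse>)\<^sup>*"
      using assms(2) by (rule rtrancl_subset_rtrancl)
    moreover have "(J \<union> E \<union> (J \<union> E)\<inverse>)\<^sup>* \<subseteq> (A \<union> E \<union> (A \<union> E)\<inverse>)\<^sup>*"
      using assms(3) by (rule rtrancl_subset_rtrancl)
    ultimately show ?thesis unfolding same_component_def by blast
  qed
  have up: "unordered_pair (J \<union> E) u v" if "unordered_pair (A \<union> E) u v" for u v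
    using that rt sc unfolding unordered_pair_def by blast
  define SA where "SA = {{u, v} | u v. u \<in> {1..n} \<and> v \<in> {1..n} \<and> unordered_pair (A \<union> E) u v}"
  define SJ where "SJ = {{u, v} | u v. u \<in> {1..n} \<and> v \<in> {1..n} \<and> unordered_pair (J \<union> E) u v}"
  have sub: "SA \<subseteq> SJ" unfolding SA_def SJ_def using up by blast
  have inJ: "{x,y} \<in> SJ" unfolding SJ_def unordered_pair_def using assms(4-10) by blast
  have xyA: "(x,y) \<in> (A \<union> E)\<^sup>*" using assms(7) by auto
  have notA: "{x,y} \<notin> SA"
  proof
    assume "{x,y} \<in> SA"
    then obtain u v where uv: "{x,y} = {u,v}" "unordered_pair (A \<union> E) u v" unfolding SA_def by blast
    from uv(1) have "(u = x \<and> v = y) \<or> (u = y \<and> v = x)" by (auto simp: doubleton_eq_iff)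
    then show False using uv(2) xyA unfolding unordered_pair_def by blast
  qed
  have "SJ \<subseteq> (\<lambda>(u,v). {u,v}) ` ({1..n} \<times> {1..n})" unfolding SJ_def by auto
  then have fin: "finite SJ" by (rule finite_subset) simp
  have "SA \<subset> SJ" using sub inJ notA by blast
  then have "card SA < card SJ" using fin by (rule psubset_card_mono[rotated])
  then show ?thesis unfolding defect_def SA_def SJ_def .
qed


lemma sym_sub:
  assumes "A \<subseteq> (J \<union> E \<union> (J \<union> E)\<inverse>)\<^sup>*"
  shows "A \<union> E \<union> (A \<union> E)\<inverse> \<subseteq> (J \<union> E \<union> (J \<union> E)\<inverse>)\<^sup>*"
proof -
  let ?S = "J \<union> E \<union> (J \<union> E)\<inverse>"
  have cs: "?S\<inverse> = ?S" by auto
  have "A \<union> E \<subseteq> ?S\<^sup>*" using assms by auto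
  moreover have "(A \<union> E)\<inverse> \<subseteq> ?S\<^sup>*"
  proof
    fix p assume "p \<in> (A \<union> E)\<inverse>"
    then obtain a b where p: "p = (b,a)" "(a,b) \<in> A \<union> E" by auto
    then have "(a,b) \<in> ?S\<^sup>*" using assms by auto
    then have "(b,a) \<in> (?S\<inverse>)\<^sup>*" by (simp add: rtrancl_converse)
    then show "p \<in> ?S\<^sup>*" using cs p(1) by simp
  qed
  ultimately show ?thesis by blast
qed

lemma two_step: "(a,b) \<in> R \<Longrightarrow> (b,c) \<in> R \<Longrightarrow> (a,c) \<in> R\<^sup>*"
  by (meson r_into_rtrancl rtrancl_into_rtrancl)

theorem lemma5p10:
  fixes n i j k :: nat and E :: "(nat \<times> nat) set"
    and R :: "(nat \<times> nat) set \<times> (nat \<times> nat) set \<times> (nat \<times> nat) set"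
  assumes "i \<in> {1..n}" and "j \<in> {1..n}" and "k \<in> {1..n}"
    and "i \<noteq> j" and "i \<noteq> k" and "j \<noteq> k"
    and "R = pruningV i j k \<or> R = pruningA i j k"
    and "E \<subseteq> {1..n} \<times> {1..n}"
    and "R = (J, A, B)"
    and "directed_forest (J \<union> E)" and "directed_forest (A \<union> E)"
    and "directed_forest (B \<union> E)"
  shows "defect n (J \<union> E) > defect n (A \<union> E) \<and> defect n (J \<union> E) > defect n (B \<union> E)"
proof -
  have nl: "\<not> has_loop (J \<union> E)" using assms(10) by (simp add: directed_forest_def)
  from assms(7) show ?thesis
  proof
    assume "R = pruningV i j k"
    then have JAB: "J = {(i,j),(i,k)}" "A = {(i,j),(j,k)}" "B = {(i,k),(k,j)}"
      using assms(9) by (auto simp: pruningV_def)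
    have n1: "(j,k) \<notin> (J \<union> E)\<^sup>*" using L1[OF nl, of i j k] JAB assms(6) by auto
    have n2: "(k,j) \<notin> (J \<union> E)\<^sup>*" using L1[OF nl, of i k j] JAB assms(6) by auto
    have sc1: "same_component (J \<union> E) j k" unfolding same_component_def
      by (rule two_step[of _ i]) (auto simp: JAB)
    have sc2: "same_component (J \<union> E) k j" unfolding same_component_def
      by (rule two_step[of _ i]) (auto simp: JAB)
    have "defect n (A \<union> E) < defect n (J \<union> E)"
    proof (rule key[of J A E j n k])
      show "J \<subseteq> (A \<union> E)\<^sup>*" unfolding JAB
        using two_step[of i j "A \<union> E" k] by (auto simp: JAB)
      show "A \<union> E \<union> (A \<union> E)\<inverse> \<subseteq> (J \<union> E \<union> (J \<union> E)\<inverse>)\<^sup>*"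
        apply (rule sym_sub)
        using two_step[of j i "J \<union> E \<union> (J \<union> E)\<inverse>" k] by (auto simp: JAB)
      show "J \<union> E \<union> (J \<union> E)\<inverse> \<subseteq> (A \<union> E \<union> (A \<union> E)\<inverse>)\<^sup>*"
        apply (rule sym_sub)
        using two_step[of i j "A \<union> E \<union> (A \<union> E)\<inverse>" k] by (auto simp: JAB)
    qed (use assms n1 n2 sc1 JAB in auto)
    moreover have "defect n (B \<union> E) < defect n (J \<union> E)"
    proof (rule key[of J B E k n j])
      show "J \<subseteq> (B \<union> E)\<^sup>*" unfolding JAB
        using two_step[of i k "B \<union> E" j] by (auto simp: JAB)
      show "B \<union> E \<union> (B \<union> E)\<inverse> \<subseteq> (J \<union> E \<union> (J \<union> E)\<inverse>)\<^sup>*"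
        apply (rule sym_sub)
        using two_step[of k i "J \<union> E \<union> (J \<union> E)\<inverse>" j] by (auto simp: JAB)
      show "J \<union> E \<union> (J \<union> E)\<inverse> \<subseteq> (B \<union> E \<union> (B \<union> E)\<inverse>)\<^sup>*"
        apply (rule sym_sub)
        using two_step[of i k "B \<union> E \<union> (B \<union> E)\<inverse>" j] by (auto simp: JAB)
    qed (use assms n1 n2 sc2 JAB in auto)
    ultimately show ?thesis by simp
  next
    assume "R = pruningA i j k"
    then have JAB: "J = {(i,k),(j,k)}" "A = {(i,j),(j,k)}" "B = {(j,i),(i,k)}"
      using assms(9) by (auto simp: pruningA_def)
    have n1: "(i,j) \<notin> (J \<union> E)\<^sup>*" using L2[OF nl, of i k j] JAB assms(4) by auto
    have n2: "(j,i) \<notin> (J \<union> E)\<^sup>*" using L2[OF nl, of j k i] JAB assms(4) by auto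
    have sc1: "same_component (J \<union> E) i j" unfolding same_component_def
      by (rule two_step[of _ k]) (auto simp: JAB)
    have sc2: "same_component (J \<union> E) j i" unfolding same_component_def
      by (rule two_step[of _ k]) (auto simp: JAB)
    have "defect n (A \<union> E) < defect n (J \<union> E)"
    proof (rule key[of J A E i n j])
      show "J \<subseteq> (A \<union> E)\<^sup>*" unfolding JAB
        using two_step[of i j "A \<union> E" k] by (auto simp: JAB)
      show "A \<union> E \<union> (A \<union> E)\<inverse> \<subseteq> (J \<union> E \<union> (J \<union> E)\<inverse>)\<^sup>*"
        apply (rule sym_sub)
        using two_step[of i k "J \<union> E \<union> (J \<union> E)\<inverse>" j] by (auto simp: JAB)
      show "J \<union> E \<union> (J \<union> E)\<inverse> \<subseteq> (A \<union> E \<union> (A \<union> E)\<inverse>)\<^sup>*"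
        apply (rule sym_sub)
        using two_step[of i j "A \<union> E \<union> (A \<union> E)\<inverse>" k] by (auto simp: JAB)
    qed (use assms n1 n2 sc1 JAB in auto)
    moreover have "defect n (B \<union> E) < defect n (J \<union> E)"
    proof (rule key[of J B E j n i])
      show "J \<subseteq> (B \<union> E)\<^sup>*" unfolding JAB
        using two_step[of j i "B \<union> E" k] by (auto simp: JAB)
      show "B \<union> E \<union> (B \<union> E)\<inverse> \<subseteq> (J \<union> E \<union> (J \<union> E)\<inverse>)\<^sup>*"
        apply (rule sym_sub)
        using two_step[of j k "J \<union> E \<union> (J \<union> E)\<inverse>" i] by (auto simp: JAB)
      show "J \<union> E \<union> (J \<union> E)\<inverse> \<subseteq> (B \<union> E \<union> (B \<union> E)\<inverse>)\<^sup>*"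
        apply (rule sym_sub)
        using two_step[of j i "B \<union> E \<union> (B \<union> E)\<inverse>" k] by (auto simp: JAB)
    qed (use assms n1 n2 sc2 JAB in auto)
    ultimately show ?thesis by simp
  qed
qed

end
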